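(* Given a mixture of Bayesian network distributions that are Markovian in $\mathcal{G}$, if $X \perp \!\!\! \perp^{\mathcal{G}}_d Y \mid \vec{C}$, then for all assignments $\vec{c}$ to $\vec{C}$, $\operatorname{rk}_+(\mathbf{M}[X, Y \mid \vec c]) \leq k$.
   Context: $\mathcal{G} = (\vec{V}, \vec{E})$ is a DAG on observed discrete variables; a latent discrete variable $U \in \{1,\ldots,k\}$ is a parent of every observed variable (the augmented DAG is $\mathcal{G}'$), so the observed distribution is a $k$-mixture (over values $u$ of $U$) of distributions $\Pr(\vec V \mid u)$, each Markovian in $\mathcal{G}$. $X, Y \in \vec V$, $\vec C \subseteq \vec V$. For discrete $X,Y$ with $m$ values, the probability matrix $\mathbf{M}[X, Y \mid \vec{c}] \in [0,1]^{m\times m}$ has entries $\mathbf{M}[X, Y \mid \vec{c}]_{x,y} := \Pr(x, y \mid \vec{c})$. $\operatorname{rk}_+$ denotes nonnegative rank. $\perp \!\!\! \perp^{\mathcal{G}}_d$ denotes d-separation in $\mathcal{G}$. *)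

theory Defs
  imports Complex_Main
begin

text \<open>The DAG is given by an edge relation E :: ('v \<times> 'v) set, (u,v) \<in> E meaning u \<rightarrow> v.\<close>

definition is_dag :: "('v \<times> 'v) set \<Rightarrow> bool" where
  "is_dag E \<longleftrightarrow> acyclic E"

definition parents :: "('v \<times> 'v) set \<Rightarrow> 'v \<Rightarrow> 'v set" where
  "parents E v = {w. (w, v) \<in> E}"

definition descendants :: "('v \<times> 'v) set \<Rightarrow> 'v \<Rightarrow> 'v set" where
  "descendants E v = {w. (v, w) \<in> E\<^sup>*}"

definition is_distribution :: "(('v::finite \<Rightarrow> 'a::finite) \<Rightarrow> real) \<Rightarrow> bool" where
  "is_distribution P \<longleftrightarrow> (\<forall>x. P x \<ge> 0) \<and> (\<Sum>x\<in>UNIV. P x) = 1"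

definition markovian :: "('v \<times> 'v) set \<Rightarrow> (('v::finite \<Rightarrow> 'a::finite) \<Rightarrow> real) \<Rightarrow> bool" where
  "markovian E P \<longleftrightarrow>
     (\<exists>K :: 'v \<Rightarrow> 'a \<Rightarrow> ('v \<Rightarrow> 'a) \<Rightarrow> real.
        (\<forall>v a z. K v a z \<ge> 0) \<and>
        (\<forall>v z. (\<Sum>a\<in>UNIV. K v a z) = 1) \<and>
        (\<forall>v a z z'. (\<forall>w\<in>parents E v. z w = z' w) \<longrightarrow> K v a z = K v a z') \<and>
        (\<forall>x. P x = (\<Prod>v\<in>UNIV. K v (x v) x)))"

text \<open>P is a k-mixture of distributions Markovian in G (latent U with values 0..k-1,
parent of every observed variable).\<close>
definition mixture_markovian ::
  "('v \<times> 'v) set \<Rightarrow> nat \<Rightarrow> (('v::finite \<Rightarrow> 'a::finite) \<Rightarrow> real) \<Rightarrow> bool" where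
  "mixture_markovian E k P \<longleftrightarrow>
     (\<exists>(w :: nat \<Rightarrow> real) (Q :: nat \<Rightarrow> ('v \<Rightarrow> 'a) \<Rightarrow> real).
        (\<forall>u<k. w u \<ge> 0) \<and> (\<Sum>u<k. w u) = 1 \<and>
        (\<forall>u<k. is_distribution (Q u) \<and> markovian E (Q u)) \<and>
        (\<forall>x. P x = (\<Sum>u<k. w u * Q u x)))"

definition is_path :: "('v \<times> 'v) set \<Rightarrow> 'v list \<Rightarrow> bool" where
  "is_path E p \<longleftrightarrow> p \<noteq> [] \<and> distinct p \<and>
     (\<forall>i. Suc i < length p \<longrightarrow> (p ! i, p ! Suc i) \<in> E \<or> (p ! Suc i, p ! i) \<in> E)"

definition collider_at :: "('v \<times> 'v) set \<Rightarrow> 'v list \<Rightarrow> nat \<Rightarrow> bool" where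
  "collider_at E p i \<longleftrightarrow> (p ! (i - 1), p ! i) \<in> E \<and> (p ! Suc i, p ! i) \<in> E"

definition blocked :: "('v \<times> 'v) set \<Rightarrow> 'v set \<Rightarrow> 'v list \<Rightarrow> bool" where
  "blocked E C p \<longleftrightarrow>
     (\<exists>i. 0 < i \<and> Suc i < length p \<and>
        (if collider_at E p i then descendants E (p ! i) \<inter> C = {} else p ! i \<in> C))"

definition d_separated :: "('v \<times> 'v) set \<Rightarrow> 'v \<Rightarrow> 'v \<Rightarrow> 'v set \<Rightarrow> bool" where
  "d_separated E X Y C \<longleftrightarrow>
     (\<forall>p. is_path E p \<and> hd p = X \<and> last p = Y \<longrightarrow> blocked E C p)"

text \<open>Pr(X=x, Y=y, C=c) and Pr(C=c); c is an assignment whose values on C matter.\<close>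
definition prob_event :: "(('v::finite \<Rightarrow> 'a::finite) \<Rightarrow> real) \<Rightarrow> (('v \<Rightarrow> 'a) \<Rightarrow> bool) \<Rightarrow> real" where
  "prob_event P A = (\<Sum>z\<in>{z. A z}. P z)"

definition prob_matrix ::
  "(('v::finite \<Rightarrow> 'a::finite) \<Rightarrow> real) \<Rightarrow> 'v \<Rightarrow> 'v \<Rightarrow> 'v set \<Rightarrow> ('v \<Rightarrow> 'a) \<Rightarrow> 'a \<Rightarrow> 'a \<Rightarrow> real" where
  "prob_matrix P X Y C c x y =
     prob_event P (\<lambda>z. z X = x \<and> z Y = y \<and> (\<forall>v\<in>C. z v = c v))
     / prob_event P (\<lambda>z. \<forall>v\<in>C. z v = c v)"

definition nonneg_rank :: "('a::finite \<Rightarrow> 'b::finite \<Rightarrow> real) \<Rightarrow> nat" where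
  "nonneg_rank M = (LEAST r. \<exists>(A :: 'a \<Rightarrow> nat \<Rightarrow> real) (B :: nat \<Rightarrow> 'b \<Rightarrow> real).
      (\<forall>x i. A x i \<ge> 0) \<and> (\<forall>i y. B i y \<ge> 0) \<and>
      (\<forall>x y. M x y = (\<Sum>i<r. A x i * B i y)))"

end

theory Submission
  imports Defs
begin

definition walk :: "('v \<times> 'v) set \<Rightarrow> 'v list \<Rightarrow> bool" where
  "walk E p \<longleftrightarrow> p \<noteq> [] \<and>
     (\<forall>i. Suc i < length p \<longrightarrow> (p ! i, p ! Suc i) \<in> E \<or> (p ! Suc i, p ! i) \<in> E)"

definition anc :: "('v \<times> 'v) set \<Rightarrow> 'v set \<Rightarrow> 'v \<Rightarrow> bool" where
  "anc E C v \<longleftrightarrow> (\<exists>c\<in>C. (v, c) \<in> E\<^sup>*)"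

lemma unblocked_iff:
  "\<not> blocked E C p \<longleftrightarrow> (\<forall>i. 0 < i \<longrightarrow> Suc i < length p \<longrightarrow>
      (collider_at E p i \<longrightarrow> anc E C (p ! i)) \<and> (\<not> collider_at E p i \<longrightarrow> p ! i \<notin> C))"
  unfolding blocked_def anc_def descendants_def by auto

lemma chain_trancl:
  assumes "\<forall>l. i \<le> l \<longrightarrow> l < j \<longrightarrow> (p ! l, p ! Suc l) \<in> E" "i < j"
  shows "(p ! i, p ! j) \<in> E\<^sup>+"
  using assms
proof (induction j)
  case 0 then show ?case by simp
next
  case (Suc j)
  show ?case
  proof (cases "i = j")
    case True then show ?thesis using Suc.prems by auto
  next
    case False
    then have "(p ! i, p ! j) \<in> E\<^sup>+" using Suc by auto
    moreover have "(p ! j, p ! Suc j) \<in> E" using Suc.prems False by auto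
    ultimately show ?thesis by auto
  qed
qed

lemma fwd_chain:
  assumes w: "walk E p" and nb: "\<not> blocked E C p" and ij: "i < j" "j < length p"
    and e: "(p ! i, p ! Suc i) \<in> E"
  shows "(\<forall>l. i \<le> l \<longrightarrow> l < j \<longrightarrow> (p ! l, p ! Suc l) \<in> E) \<or> anc E C (p ! i)"
  using ij
proof (induction j)
  case 0 then show ?case by simp
next
  case (Suc j)
  show ?case
  proof (cases "i = j")
    case True then show ?thesis using e by (metis le_less_Suc_eq)
  next
    case False
    with Suc have IH: "(\<forall>l. i \<le> l \<longrightarrow> l < j \<longrightarrow> (p ! l, p ! Suc l) \<in> E) \<or> anc E C (p ! i)"
      by auto
    show ?thesis
    proof (cases "anc E C (p ! i)")
      case True then show ?thesis by simp
    next
      case na: False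
      with IH have ch: "\<forall>l. i \<le> l \<longrightarrow> l < j \<longrightarrow> (p ! l, p ! Suc l) \<in> E" by simp
      show ?thesis
      proof (cases "(p ! j, p ! Suc j) \<in> E")
        case True then show ?thesis using ch by (metis less_Suc_eq)
      next
        case False
        then have b: "(p ! Suc j, p ! j) \<in> E" using w Suc.prems unfolding walk_def by blast
        have ij': "i < j" using False Suc.prems False \<open>i \<noteq> j\<close> by simp
        then have a: "(p ! (j - 1), p ! j) \<in> E" using ch[rule_format, of "j - 1"] by simp
        have col: "collider_at E p j" unfolding collider_at_def using a b by simp
        have "anc E C (p ! j)" using nb col ij' Suc.prems unfolding unblocked_iff
          by (metis gr0I not_less0)
        moreover have "(p ! i, p ! j) \<in> E\<^sup>+" using chain_trancl[OF ch ij'] .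
        ultimately have "anc E C (p ! i)" unfolding anc_def
          by (meson rtrancl_trans trancl_into_rtrancl)
        then show ?thesis by simp
      qed
    qed
  qed
qed

lemma collider_append_same:
  assumes "Suc i < length p"
  shows "collider_at E (p @ q) i = collider_at E p i"
proof -
  have "i - 1 < length p" "i < length p" using assms by auto
  then show ?thesis using assms unfolding collider_at_def by (simp add: nth_append)
qed

lemma walk_append:
  assumes w: "walk E p" and adj: "(last p, s) \<in> E \<or> (s, last p) \<in> E"
    and nb: "\<not> blocked E C p"
    and cond: "length p \<ge> 2 \<Longrightarrow>
      (collider_at E (p @ [s]) (length p - 1) \<longrightarrow> anc E C (last p)) \<and>
      (\<not> collider_at E (p @ [s]) (length p - 1) \<longrightarrow> last p \<notin> C)"
  shows "walk E (p @ [s]) \<and> \<not> blocked E C (p @ [s])"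
proof
  have pne: "p \<noteq> []" using w unfolding walk_def by simp
  have lp: "last p = p ! (length p - 1)" using pne by (simp add: last_conv_nth)
  show "walk E (p @ [s])"
    unfolding walk_def
  proof (intro conjI allI impI)
    fix i assume i: "Suc i < length (p @ [s])"
    show "((p @ [s]) ! i, (p @ [s]) ! Suc i) \<in> E \<or> ((p @ [s]) ! Suc i, (p @ [s]) ! i) \<in> E"
    proof (cases "Suc i < length p")
      case True then show ?thesis using w unfolding walk_def by (simp add: nth_append)
    next
      case False
      then have "i = length p - 1" using i by simp
      then show ?thesis using adj lp pne False by (simp add: nth_append)
    qed
  qed simp
  show "\<not> blocked E C (p @ [s])"
    unfolding unblocked_iff
  proof (intro allI impI)
    fix i assume i0: "0 < i" and i: "Suc i < length (p @ [s])"
    show "(collider_at E (p @ [s]) i \<longrightarrow> anc E C ((p @ [s]) ! i)) \<and>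
          (\<not> collider_at E (p @ [s]) i \<longrightarrow> (p @ [s]) ! i \<notin> C)"
    proof (cases "Suc i < length p")
      case True
      have c1: "collider_at E (p @ [s]) i = collider_at E p i" by (rule collider_append_same[OF True])
      have c2: "(p @ [s]) ! i = p ! i" using True by (simp add: nth_append)
      have "(collider_at E p i \<longrightarrow> anc E C (p ! i)) \<and> (\<not> collider_at E p i \<longrightarrow> p ! i \<notin> C)"
        using nb i0 True unfolding unblocked_iff by blast
      then show ?thesis unfolding c1 c2 .
    next
      case False
      then have ii: "i = length p - 1" using i by simp
      then have "length p \<ge> 2" using i0 by simp
      then show ?thesis using cond ii lp pne by (simp add: nth_append)
    qed
  qed
qed

definition active :: "('v \<times> 'v) set \<Rightarrow> 'v set \<Rightarrow> 'v list \<Rightarrow> bool" where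
  "active E C p \<longleftrightarrow> walk E p \<and> \<not> blocked E C p"

lemma acyc_irrefl: "acyclic E \<Longrightarrow> (a, a) \<notin> E"
  unfolding acyclic_def by blast

lemma acyc_asym:
  assumes ac: "acyclic E" and ab: "(a, b) \<in> E" shows "(b, a) \<notin> E"
proof
  assume "(b, a) \<in> E"
  with ab have "(a, a) \<in> E\<^sup>+" by (meson trancl.r_into_trancl trancl_into_trancl)
  then show False using ac unfolding acyclic_def by blast
qed

definition last_in :: "('v \<times> 'v) set \<Rightarrow> 'v list \<Rightarrow> bool" where
  "last_in E p \<longleftrightarrow> length p \<ge> 2 \<and> (p ! (length p - 2), last p) \<in> E"

lemma collider_last:
  assumes "length p \<ge> 2"
  shows "collider_at E (p @ [s]) (length p - 1) \<longleftrightarrow> last_in E p \<and> (s, last p) \<in> E"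
proof -
  obtain xs x where p: "p = xs @ [x]" using assms by (cases p rule: rev_cases) auto
  have "xs \<noteq> []" using assms p by auto
  then obtain ys y where xs: "xs = ys @ [y]" by (cases xs rule: rev_cases) auto
  show ?thesis unfolding collider_at_def last_in_def p xs by (simp add: nth_append)
qed

lemma append_out:
  assumes ac: "acyclic E" and a: "active E C p" and e: "(last p, s) \<in> E"
    and nc: "length p \<ge> 2 \<Longrightarrow> last p \<notin> C"
  shows "active E C (p @ [s])"
proof -
  have "(s, last p) \<notin> E" using acyc_asym[OF ac e] .
  then have "\<not> collider_at E (p @ [s]) (length p - 1)" if "length p \<ge> 2"
    using collider_last[OF that] by simp
  then show ?thesis using a e nc unfolding active_def
    by (intro walk_append) auto
qed

lemma append_in_nocol:
  assumes ac: "acyclic E" and a: "active E C p" and e: "(s, last p) \<in> E"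
    and nli: "\<not> last_in E p" and nc: "length p \<ge> 2 \<Longrightarrow> last p \<notin> C"
  shows "active E C (p @ [s])"
proof -
  have "\<not> collider_at E (p @ [s]) (length p - 1)" if "length p \<ge> 2"
    using collider_last[OF that] nli by simp
  then show ?thesis using a e nc unfolding active_def
    by (intro walk_append) auto
qed

lemma append_in_col:
  assumes ac: "acyclic E" and a: "active E C p" and e: "(s, last p) \<in> E"
    and an: "anc E C (last p)"
    and nc: "\<not> last_in E p \<Longrightarrow> length p \<ge> 2 \<Longrightarrow> last p \<notin> C"
  shows "active E C (p @ [s])"
proof -
  have "\<not> collider_at E (p @ [s]) (length p - 1) \<Longrightarrow> last p \<notin> C" if "length p \<ge> 2"
    using collider_last[OF that] nc e that by blast
  then show ?thesis using a e an unfolding active_def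
    by (intro walk_append) auto
qed

lemma last_in_append: "p \<noteq> [] \<Longrightarrow> last_in E (p @ [s]) \<longleftrightarrow> (last p, s) \<in> E"
  unfolding last_in_def by (cases p rule: rev_cases) (auto simp: nth_append)

lemma down:
  assumes ac: "acyclic E" and a: "active E C p" and r: "(last p, s) \<in> E\<^sup>*"
    and na: "\<not> anc E C (last p)"
  shows "\<exists>q. active E C q \<and> hd q = hd p \<and> last q = s"
  using r
proof (induction rule: rtrancl_induct)
  case base then show ?case using a by blast
next
  case (step y z)
  then obtain q where q: "active E C q" "hd q = hd p" "last q = y" by blast
  have qne: "q \<noteq> []" using q unfolding active_def walk_def by simp
  have "y \<notin> C" using na step(1) unfolding anc_def by blast
  then have "active E C (q @ [z])" using append_out[OF ac q(1)] q step by simp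
  then show ?case using q qne by auto
qed

lemma up:
  assumes ac: "acyclic E" and r: "(t, X) \<in> E\<^sup>*" and na: "\<not> anc E C t"
  shows "\<exists>p. active E C p \<and> hd p = X \<and> last p = t \<and> \<not> last_in E p"
  using r na
proof (induction rule: converse_rtrancl_induct)
  case base
  have "active E C [X]" unfolding active_def walk_def blocked_def by simp
  then show ?case unfolding last_in_def by auto
next
  case (step y z)
  have "\<not> anc E C z" using step(1) step.prems unfolding anc_def
    by (meson converse_rtrancl_into_rtrancl)
  then obtain p where p: "active E C p" "hd p = X" "last p = z" "\<not> last_in E p"
    using step.IH by blast
  have pne: "p \<noteq> []" using p unfolding active_def walk_def by simp
  have "z \<notin> C" using \<open>\<not> anc E C z\<close> unfolding anc_def by blast
  then have "active E C (p @ [y])" using append_in_nocol[OF ac p(1)] p step(1) by simp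
  moreover have "\<not> last_in E (p @ [y])"
  proof
    assume "last_in E (p @ [y])"
    then have "(z, y) \<in> E" using last_in_append[OF pne] p by simp
    then show False using step(1) acyc_asym[OF ac] by blast
  qed
  ultimately show ?case using p pne by auto
qed

lemma splice_nth:
  assumes "i < j" "j < length p" "l < length (take i p @ drop j p)"
  shows "(take i p @ drop j p) ! l = (if l < i then p ! l else p ! (l + (j - i)))"
  using assms by (auto simp: nth_append min_def intro!: arg_cong[where f="(!) p"])

lemma splice_len:
  assumes "i < j" "j < length p"
  shows "length (take i p @ drop j p) = length p - (j - i)"
  using assms by auto

lemma splice_active:
  assumes ac: "acyclic E" and a: "active E C p" and ij: "i < j" "j < length p"
    and eq: "p ! i = p ! j"
  shows "active E C (take i p @ drop j p) \<and> hd (take i p @ drop j p) = hd p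
         \<and> last (take i p @ drop j p) = last p"
proof -
  define q where "q = take i p @ drop j p"
  define d where "d = j - i"
  have w: "walk E p" and nb: "\<not> blocked E C p" using a unfolding active_def by auto
  have lq: "length q = length p - d" unfolding q_def d_def using splice_len[OF ij] .
  have qn: "\<And>l. l < length q \<Longrightarrow> q ! l = (if l < i then p ! l else p ! (l + d))"
    unfolding q_def d_def using splice_nth[OF ij] by blast
  have d0: "0 < d" "i + d = j" using ij unfolding d_def by auto
  have pc: "\<And>l. 0 < l \<Longrightarrow> Suc l < length p \<Longrightarrow>
      (collider_at E p l \<longrightarrow> anc E C (p ! l)) \<and> (\<not> collider_at E p l \<longrightarrow> p ! l \<notin> C)"
    using nb unfolding unblocked_iff by blast
  have pw: "\<And>l. Suc l < length p \<Longrightarrow> (p ! l, p ! Suc l) \<in> E \<or> (p ! Suc l, p ! l) \<in> E"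
    using w unfolding walk_def by blast
  have qne: "q \<noteq> []" using lq d0 ij by auto
  have walkq: "walk E q"
    unfolding walk_def
  proof (intro conjI allI impI qne)
    fix l assume l: "Suc l < length q"
    show "(q ! l, q ! Suc l) \<in> E \<or> (q ! Suc l, q ! l) \<in> E"
    proof (cases "Suc l < i")
      case True then show ?thesis using qn l pw ij by auto
    next
      case False
      show ?thesis
      proof (cases "Suc l = i")
        case True
        then have "q ! l = p ! l" "q ! Suc l = p ! Suc l" using qn l eq d0 by auto
        then show ?thesis using pw[of l] True ij by auto
      next
        case False
        then have "q ! l = p ! (l + d)" "q ! Suc l = p ! (Suc l + d)"
          using qn l \<open>\<not> Suc l < i\<close> by auto
        moreover have "Suc (l + d) < length p" using l lq by auto
        ultimately show ?thesis using pw[of "l + d"] by auto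
      qed
    qed
  qed
  have nbq: "\<not> blocked E C q"
    unfolding unblocked_iff
  proof (intro allI impI)
    fix l assume l0: "0 < l" and l: "Suc l < length q"
    show "(collider_at E q l \<longrightarrow> anc E C (q ! l)) \<and> (\<not> collider_at E q l \<longrightarrow> q ! l \<notin> C)"
    proof (cases "l < i")
      case True
      have e1: "q ! (l - 1) = p ! (l - 1)" "q ! l = p ! l" using qn l True by auto
      have e2: "q ! Suc l = p ! Suc l"
      proof (cases "Suc l < i")
        case True then show ?thesis using qn l by auto
      next
        case False then have "Suc l = i" using \<open>l < i\<close> by simp
        then show ?thesis using qn l eq d0 by auto
      qed
      have "collider_at E q l = collider_at E p l" unfolding collider_at_def e1 e2 ..
      then show ?thesis using pc[of l] l0 True ij e1 by auto
    next
      case False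
      show ?thesis
      proof (cases "l = i")
        case False
        with \<open>\<not> l < i\<close> have li: "i < l" by simp
        have e1: "q ! (l - 1) = p ! (l - 1 + d)" "q ! l = p ! (l + d)" "q ! Suc l = p ! (Suc l + d)"
          using qn l li by auto
        have "l - 1 + d = (l + d) - 1" using li by simp
        then have "collider_at E q l = collider_at E p (l + d)"
          unfolding collider_at_def e1 by simp
        moreover have "Suc (l + d) < length p" using l lq by auto
        ultimately show ?thesis using pc[of "l + d"] l0 e1 by auto
      next
        case True
        define w where "w = p ! i"
        have e1: "q ! (i - 1) = p ! (i - 1)" "q ! i = w" "q ! Suc i = p ! Suc j"
          using qn l True l0 d0 eq unfolding w_def by auto
        have sj: "Suc j < length p" using l lq True d0 by auto
        have cq: "collider_at E q i \<longleftrightarrow> (p ! (i - 1), w) \<in> E \<and> (p ! Suc j, w) \<in> E"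
          unfolding collider_at_def e1 ..
        have ci: "collider_at E p i \<longleftrightarrow> (p ! (i - 1), w) \<in> E \<and> (p ! Suc i, w) \<in> E"
          unfolding collider_at_def w_def ..
        have cj: "collider_at E p j \<longleftrightarrow> (p ! (j - 1), w) \<in> E \<and> (p ! Suc j, w) \<in> E"
          unfolding collider_at_def w_def eq ..
        have pi: "(collider_at E p i \<longrightarrow> anc E C w) \<and> (\<not> collider_at E p i \<longrightarrow> w \<notin> C)"
          using pc[of i] l0 True ij unfolding w_def by auto
        have pj: "(collider_at E p j \<longrightarrow> anc E C w) \<and> (\<not> collider_at E p j \<longrightarrow> w \<notin> C)"
          using pc[of j] sj ij unfolding w_def eq by auto
        have A: "anc E C w" if col: "collider_at E q i"
        proof (cases "collider_at E p i")
          case True then show ?thesis using pi by simp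
        next
          case False
          then have "(p ! Suc i, p ! i) \<notin> E" using ci cq col unfolding w_def by auto
          then have f: "(p ! i, p ! Suc i) \<in> E" using pw[of i] ij by auto
          from fwd_chain[OF w nb ij f]
          show ?thesis
          proof
            assume "\<forall>l. i \<le> l \<longrightarrow> l < j \<longrightarrow> (p ! l, p ! Suc l) \<in> E"
            then have "(p ! i, p ! j) \<in> E\<^sup>+" using chain_trancl ij by blast
            then show ?thesis using ac eq unfolding acyclic_def by auto
          qed (simp add: w_def)
        qed
        have B: "w \<notin> C" if ncol: "\<not> collider_at E q i"
        proof (cases "collider_at E p i")
          case False then show ?thesis using pi by simp
        next
          case True
          show ?thesis
          proof (cases "collider_at E p j")
            case False then show ?thesis using pj by simp
          next
            case True
            then show ?thesis using ci cj cq ncol \<open>collider_at E p i\<close> by auto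
          qed
        qed
        show ?thesis using A B True e1 by auto
      qed
    qed
  qed
  have "hd q = hd p"
  proof (cases "0 < i")
    case True
    have "p \<noteq> []" using ij by auto
    then show ?thesis using True qn[of 0] qne hd_conv_nth[OF qne] hd_conv_nth[of p] by auto
  next
    case False
    then have "hd q = p ! j" using qn[of 0] qne hd_conv_nth[OF qne] d0 by auto
    moreover have "p \<noteq> []" using ij by auto
    ultimately show ?thesis using eq False hd_conv_nth[of p] by auto
  qed
  moreover have "last q = last p"
  proof -
    have "length q - 1 \<ge> i" using lq d0 ij by auto
    then have "last q = p ! (length q - 1 + d)" using qn[of "length q - 1"] qne last_conv_nth[OF qne] d0
      by (cases "i = length q - 1") auto
    moreover have "length q - 1 + d = length p - 1" using lq d0 ij by auto
    moreover have "p \<noteq> []" using ij by auto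
    ultimately show ?thesis using last_conv_nth[of p] by auto
  qed
  ultimately show ?thesis using walkq nbq unfolding active_def q_def by auto
qed

lemma shorten:
  assumes ac: "acyclic E"
  shows "active E C p \<Longrightarrow> \<exists>q. is_path E q \<and> hd q = hd p \<and> last q = last p \<and> \<not> blocked E C q"
proof (induction p rule: length_induct)
  case (1 p)
  show ?case
  proof (cases "distinct p")
    case True then show ?thesis using "1.prems" unfolding active_def walk_def is_path_def by auto
  next
    case False
    then obtain i j where ij: "i < length p" "j < length p" "i \<noteq> j" "p ! i = p ! j"
      unfolding distinct_conv_nth by blast
    then obtain a b where ab: "a < b" "b < length p" "p ! a = p ! b"
      by (metis linorder_neqE_nat)
    from splice_active[OF ac "1.prems" ab]
    have s: "active E C (take a p @ drop b p)" "hd (take a p @ drop b p) = hd p"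
      "last (take a p @ drop b p) = last p" by auto
    have "length (take a p @ drop b p) < length p" using ab by auto
    then show ?thesis using "1.IH" s by metis
  qed
qed

lemma active_single: "active E C [x]"
  unfolding active_def walk_def blocked_def by simp

lemma active_ne: "active E C p \<Longrightarrow> p \<noteq> []"
  unfolding active_def walk_def by simp

lemma noY:
  assumes ac: "acyclic E" and ds: "d_separated E X Y C"
  shows "\<not> (\<exists>p. active E C p \<and> hd p = X \<and> last p = Y)"
proof
  assume "\<exists>p. active E C p \<and> hd p = X \<and> last p = Y"
  then obtain p where "active E C p" "hd p = X" "last p = Y" by blast
  then obtain q where "is_path E q" "hd q = X" "last q = Y" "\<not> blocked E C q"
    using shorten[OF ac] by metis
  then show False using ds unfolding d_separated_def by blast
qed

lemma ext_in:
  assumes ac: "acyclic E" and nY: "\<not> (\<exists>p. active E C p \<and> hd p = X \<and> last p = Y)"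
    and a: "active E C p" and h: "hd p = X" and l: "last p = t"
    and li: "last_in E p \<or> t \<notin> C"
    and e: "(w, t) \<in> E"
    and tA: "(t, X) \<in> E\<^sup>* \<or> (t, Y) \<in> E\<^sup>* \<or> anc E C t"
  shows "\<exists>q. active E C q \<and> hd q = X \<and> last q = w"
proof -
  have pne: "p \<noteq> []" using active_ne[OF a] .
  show ?thesis
  proof (cases "last_in E p")
    case False
    then have "active E C (p @ [w])" using append_in_nocol[OF ac a] e l li by auto
    then show ?thesis using pne h by auto
  next
    case True
    show ?thesis
    proof (cases "anc E C t")
      case True
      then have "active E C (p @ [w])" using append_in_col[OF ac a] e l \<open>last_in E p\<close> by auto
      then show ?thesis using pne h by auto
    next
      case na: False
      show ?thesis
      proof (cases "(t, Y) \<in> E\<^sup>*")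
        case True
        then obtain q where "active E C q" "hd q = hd p" "last q = Y"
          using down[OF ac a] na l by blast
        then show ?thesis using h nY by blast
      next
        case False
        then have tX: "(t, X) \<in> E\<^sup>*" using tA na by auto
        obtain p' where p': "active E C p'" "hd p' = X" "last p' = t" "\<not> last_in E p'"
          using up[OF ac tX na] by blast
        have "t \<notin> C" using na unfolding anc_def by blast
        then have "active E C (p' @ [w])" using append_in_nocol[OF ac p'(1)] e p' by auto
        then show ?thesis using active_ne[OF p'(1)] p' by auto
      qed
    qed
  qed
qed

definition Rset :: "('v \<times> 'v) set \<Rightarrow> 'v set \<Rightarrow> 'v \<Rightarrow> 'v set" where
  "Rset E C X = {t. t \<notin> C \<and> (\<exists>p. active E C p \<and> hd p = X \<and> last p = t)}"

definition Aset :: "('v \<times> 'v) set \<Rightarrow> 'v set \<Rightarrow> 'v \<Rightarrow> 'v \<Rightarrow> 'v set" where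
  "Aset E C X Y = {v. (v, X) \<in> E\<^sup>* \<or> (v, Y) \<in> E\<^sup>* \<or> anc E C v}"

lemma Aset_parent: "v \<in> Aset E C X Y \<Longrightarrow> u \<in> parents E v \<Longrightarrow> u \<in> Aset E C X Y"
proof -
  assume "v \<in> Aset E C X Y" "u \<in> parents E v"
  then have uv: "(u, v) \<in> E" and "(v, X) \<in> E\<^sup>* \<or> (v, Y) \<in> E\<^sup>* \<or> (\<exists>c\<in>C. (v, c) \<in> E\<^sup>*)"
    unfolding Aset_def parents_def anc_def by auto
  then have "(u, X) \<in> E\<^sup>* \<or> (u, Y) \<in> E\<^sup>* \<or> (\<exists>c\<in>C. (u, c) \<in> E\<^sup>*)"
    using converse_rtrancl_into_rtrancl[OF uv] by blast
  then show ?thesis unfolding Aset_def anc_def by simp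
qed

lemma closure:
  assumes ac: "acyclic E" and nY: "\<not> (\<exists>p. active E C p \<and> hd p = X \<and> last p = Y)"
    and vA: "v \<in> Aset E C X Y"
    and t: "t \<in> insert v (parents E v)" and w: "w \<in> insert v (parents E v)"
    and tc: "t \<notin> C" and wc: "w \<notin> C" and tR: "t \<in> Rset E C X"
  shows "w \<in> Rset E C X"
proof -
  obtain p where p: "active E C p" "hd p = X" "last p = t" using tR unfolding Rset_def by blast
  have pne: "p \<noteq> []" using active_ne[OF p(1)] .
  have "\<exists>q. active E C q \<and> hd q = X \<and> last q = w"
  proof (cases "t = w")
    case True then show ?thesis using p by blast
  next
    case tw: False
    show ?thesis
    proof (cases "t = v")
      case True
      then have e: "(w, t) \<in> E" using w tw unfolding parents_def by auto
      have "(t, X) \<in> E\<^sup>* \<or> (t, Y) \<in> E\<^sup>* \<or> anc E C t" using vA True unfolding Aset_def by auto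
      show ?thesis by (rule ext_in[OF ac nY p(1) p(2) p(3) _ e]) (use tc \<open>(t, X) \<in> E\<^sup>* \<or> (t, Y) \<in> E\<^sup>* \<or> anc E C t\<close> in auto)
    next
      case tv: False
      then have et: "(t, v) \<in> E" using t unfolding parents_def by auto
      have p1: "active E C (p @ [v])" using append_out[OF ac p(1)] et p tc by auto
      show ?thesis
      proof (cases "w = v")
        case True then show ?thesis using p1 pne p by auto
      next
        case False
        then have e: "(w, v) \<in> E" using w unfolding parents_def by auto
        have li: "last_in E (p @ [v])" using last_in_append[OF pne] et p by simp
        have "(v, X) \<in> E\<^sup>* \<or> (v, Y) \<in> E\<^sup>* \<or> anc E C v" using vA unfolding Aset_def by auto
        show ?thesis by (rule ext_in[OF ac nY p1 _ _ _ e]) (use li pne p \<open>(v, X) \<in> E\<^sup>* \<or> (v, Y) \<in> E\<^sup>* \<or> anc E C v\<close> in auto)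
      qed
    qed
  qed
  then show ?thesis using wc unfolding Rset_def by blast
qed

lemma X_in_R: "X \<notin> C \<Longrightarrow> X \<in> Rset E C X"
proof -
  assume "X \<notin> C"
  moreover have "active E C [X] \<and> hd [X] = X \<and> last [X] = X" using active_single by simp
  ultimately show ?thesis unfolding Rset_def by blast
qed

lemma Y_notin_R: "acyclic E \<Longrightarrow> d_separated E X Y C \<Longrightarrow> Y \<notin> Rset E C X"
proof
  assume "acyclic E" "d_separated E X Y C" "Y \<in> Rset E C X"
  then have "\<exists>p. active E C p \<and> hd p = X \<and> last p = Y" unfolding Rset_def by simp
  then show False using noY[OF \<open>acyclic E\<close> \<open>d_separated E X Y C\<close>] by blast
qed

lemma swap_sum:
  fixes h :: "('v::finite \<Rightarrow> 'a::finite) \<Rightarrow> real" and d :: "'v"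
  shows "(\<Sum>z\<in>UNIV. \<Sum>b\<in>UNIV. h (z(d := b))) = real (card (UNIV :: 'a set)) * (\<Sum>z\<in>UNIV. h z)"
proof -
  have "(\<Sum>z\<in>UNIV. \<Sum>b\<in>UNIV. h (z(d := b))) = (\<Sum>(z, b)\<in>UNIV \<times> UNIV. h (z(d := b)))"
    by (simp add: sum.cartesian_product)
  also have "\<dots> = (\<Sum>(z, b)\<in>UNIV \<times> (UNIV :: 'a set). h z)"
    by (rule sum.reindex_bij_witness[where i = "\<lambda>(z, b). (z(d := b), z d)" and j = "\<lambda>(z, b). (z(d := b), z d)"])
       auto
  also have "\<dots> = (\<Sum>z\<in>UNIV. \<Sum>b\<in>(UNIV :: 'a set). h z)"
    by (rule sum.cartesian_product[symmetric])
  also have "\<dots> = real (card (UNIV :: 'a set)) * (\<Sum>z\<in>UNIV. h z)"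
    by (simp add: sum_distrib_left)
  finally show ?thesis .
qed

lemma sumout_one:
  fixes K :: "'v::finite \<Rightarrow> 'a::finite \<Rightarrow> ('v \<Rightarrow> 'a) \<Rightarrow> real"
    and H :: "('v \<Rightarrow> 'a) \<Rightarrow> real"
  assumes dd: "d \<notin> parents E d"
    and Ksum: "\<forall>z. (\<Sum>a\<in>UNIV. K d a z) = 1"
    and Kloc: "\<forall>a z z'. (\<forall>w\<in>parents E d. z w = z' w) \<longrightarrow> K d a z = K d a z'"
    and Hd: "\<forall>z b. H (z(d := b)) = H z"
  shows "(\<Sum>z\<in>UNIV. H z * K d (z d) z) = (1 / real (card (UNIV :: 'a set))) * (\<Sum>z\<in>UNIV. H z)"
proof -
  have "real (card (UNIV :: 'a set)) * (\<Sum>z\<in>UNIV. H z * K d (z d) z)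
        = (\<Sum>z\<in>UNIV. \<Sum>b\<in>UNIV. H (z(d := b)) * K d ((z(d := b)) d) (z(d := b)))"
    using swap_sum[of "\<lambda>z. H z * K d (z d) z" d] by simp
  also have "\<dots> = (\<Sum>z\<in>UNIV. \<Sum>b\<in>UNIV. H z * K d b z)"
  proof (intro sum.cong refl)
    fix z b
    have "K d b (z(d := b)) = K d b z" using Kloc dd by auto
    then show "H (z(d := b)) * K d ((z(d := b)) d) (z(d := b)) = H z * K d b z" using Hd by simp
  qed
  also have "\<dots> = (\<Sum>z\<in>UNIV. H z)" using Ksum by (simp add: sum_distrib_left[symmetric])
  finally show ?thesis by (simp add: field_simps)
qed

lemma sumout:
  fixes K :: "'v::finite \<Rightarrow> 'a::finite \<Rightarrow> ('v \<Rightarrow> 'a) \<Rightarrow> real"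
    and H :: "('v \<Rightarrow> 'a) \<Rightarrow> real"
  assumes ac: "acyclic E"
    and Ksum: "\<forall>v z. (\<Sum>a\<in>UNIV. K v a z) = 1"
    and Kloc: "\<forall>v a z z'. (\<forall>w\<in>parents E v. z w = z' w) \<longrightarrow> K v a z = K v a z'"
  shows "(\<forall>z z'. (\<forall>v. v \<notin> D \<longrightarrow> z v = z' v) \<longrightarrow> H z = H z') \<Longrightarrow>
    (\<Sum>z\<in>UNIV. H z * (\<Prod>v\<in>D. K v (z v) z)) = (1 / real (card (UNIV :: 'a set))) ^ card D * (\<Sum>z\<in>UNIV. H z)"
  using finite[of D]
proof (induction D rule: finite_remove_induct)
  case empty then show ?case by simp
next
  case (remove A)
  have fE: "finite E" by (rule finite_subset[of _ UNIV]) auto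
  have wfE: "wf (E\<inverse>)" using finite_acyclic_wf_converse[OF fE ac] .
  obtain x where xA: "x \<in> A" using remove.hyps(2) by blast
  obtain d where dA: "d \<in> A" and dmin0: "\<forall>y. (y, d) \<in> E\<inverse> \<longrightarrow> y \<notin> A"
    using wfE[unfolded wf_eq_minimal, rule_format, OF xA] by blast
  have dmin: "\<forall>y. (d, y) \<in> E \<longrightarrow> y \<notin> A" using dmin0 by simp
  have dd: "d \<notin> parents E d" using dmin dA unfolding parents_def by blast
  define H2 where "H2 z = H z * (\<Prod>v\<in>A - {d}. K v (z v) z)" for z
  have H2d: "\<forall>z b. H2 (z(d := b)) = H2 z"
  proof (intro allI)
    fix z :: "'v \<Rightarrow> 'a" and b :: 'a
    have "\<forall>v. v \<notin> A \<longrightarrow> (z(d := b)) v = z v" using dA by auto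
    then have "H (z(d := b)) = H z" using remove.prems[rule_format, of "z(d := b)" z] by blast
    moreover have "(\<Prod>v\<in>A - {d}. K v ((z(d := b)) v) (z(d := b))) = (\<Prod>v\<in>A - {d}. K v (z v) z)"
    proof (intro prod.cong refl)
      fix v assume v: "v \<in> A - {d}"
      then have "d \<notin> parents E v" using dmin unfolding parents_def by auto
      then have "\<forall>w\<in>parents E v. (z(d := b)) w = z w" by auto
      then have "K v (z v) (z(d := b)) = K v (z v) z" using spec[OF spec[OF spec[OF spec[OF Kloc, of v], of "z v"], of "z(d := b)"], of z] by blast
      then show "K v ((z(d := b)) v) (z(d := b)) = K v (z v) z" using v by auto
    qed
    ultimately show "H2 (z(d := b)) = H2 z" unfolding H2_def by simp
  qed
  have "(\<Sum>z\<in>UNIV. H z * (\<Prod>v\<in>A. K v (z v) z)) = (\<Sum>z\<in>UNIV. H2 z * K d (z d) z)"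
  proof (intro sum.cong refl)
    fix z
    have "(\<Prod>v\<in>A. K v (z v) z) = K d (z d) z * (\<Prod>v\<in>A - {d}. K v (z v) z)"
      using prod.remove[OF remove.hyps(1) dA] .
    then show "H z * (\<Prod>v\<in>A. K v (z v) z) = H2 z * K d (z d) z"
      unfolding H2_def by (simp only: mult_ac)
  qed
  also have "\<dots> = (1 / real (card (UNIV :: 'a set))) * (\<Sum>z\<in>UNIV. H2 z)"
    by (rule sumout_one[OF dd _ _ H2d]) (use Ksum Kloc in auto)
  also have "(\<Sum>z\<in>UNIV. H2 z) = (1 / real (card (UNIV :: 'a set))) ^ card (A - {d}) * (\<Sum>z\<in>UNIV. H z)"
    unfolding H2_def
  proof (rule remove.IH[OF dA])
    show "\<forall>z z'. (\<forall>v. v \<notin> A - {d} \<longrightarrow> z v = z' v) \<longrightarrow> H z = H z'"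
    proof (intro allI impI)
      fix z z' :: "'v \<Rightarrow> 'a" assume "\<forall>v. v \<notin> A - {d} \<longrightarrow> z v = z' v"
      then have "\<forall>v. v \<notin> A \<longrightarrow> z v = z' v" by auto
      then show "H z = H z'" using remove.prems[rule_format, of z z'] by blast
    qed
  qed
  also have "card A = Suc (card (A - {d}))" using remove.hyps(1) dA
    using card_Suc_Diff1[OF remove.hyps(1) dA] by simp
  ultimately show ?case by (simp only: power_Suc mult.assoc)
qed

lemma prod_split_sum:
  fixes \<phi> \<psi> :: "('v::finite \<Rightarrow> 'a::finite) \<Rightarrow> real"
  assumes CT: "C \<inter> T = {}"
    and \<phi>loc: "\<And>z z'. (\<forall>v. v \<notin> T \<longrightarrow> z v = z' v) \<Longrightarrow> \<phi> z = \<phi> z'"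
    and \<psi>loc: "\<And>z z'. (\<forall>v. v \<in> T \<or> v \<in> C \<longrightarrow> z v = z' v) \<Longrightarrow> \<psi> z = \<psi> z'"
    and \<phi>0: "\<And>z. \<not> (\<forall>v\<in>C. z v = c v) \<Longrightarrow> \<phi> z = 0"
    and \<psi>0: "\<And>z. \<not> (\<forall>v\<in>C. z v = c v) \<Longrightarrow> \<psi> z = 0"
  shows "(\<Sum>z\<in>UNIV. \<phi> z) * (\<Sum>z\<in>UNIV. \<psi> z)
         = (\<Sum>z\<in>UNIV. if \<forall>v\<in>C. z v = c v then 1 else 0) * (\<Sum>z\<in>UNIV. \<phi> z * \<psi> z)"
proof -
  define sw :: "('v \<Rightarrow> 'a) \<times> ('v \<Rightarrow> 'a) \<Rightarrow> ('v \<Rightarrow> 'a) \<times> ('v \<Rightarrow> 'a)" where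
    "sw = (\<lambda>(z1, z2). (\<lambda>v. if v \<in> T then z2 v else z1 v, \<lambda>v. if v \<in> T then z1 v else z2 v))"
  define ind :: "('v \<Rightarrow> 'a) \<Rightarrow> real" where "ind z = (if \<forall>v\<in>C. z v = c v then 1 else 0)" for z
  define G where "G = (\<lambda>(m1, m2). \<phi> m1 * \<psi> m1 * ind m2)"
  have sw_sw: "sw (sw p) = p" for p
    unfolding sw_def by (cases p) auto
  have pt: "\<phi> z1 * \<psi> z2 = G (sw (z1, z2))" for z1 z2
  proof -
    define m1 where "m1 = (\<lambda>v. if v \<in> T then z2 v else z1 v)"
    define m2 where "m2 = (\<lambda>v. if v \<in> T then z1 v else z2 v)"
    have G: "G (sw (z1, z2)) = \<phi> m1 * \<psi> m1 * ind m2"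
      unfolding G_def sw_def m1_def m2_def by simp
    have p1: "\<phi> m1 = \<phi> z1" by (rule \<phi>loc) (simp add: m1_def)
    have m2C: "(\<forall>v\<in>C. m2 v = c v) \<longleftrightarrow> (\<forall>v\<in>C. z2 v = c v)"
      unfolding m2_def using CT by auto
    show ?thesis
    proof (cases "\<forall>v\<in>C. z2 v = c v")
      case False
      then have "ind m2 = 0" using m2C unfolding ind_def by simp
      then show ?thesis using G \<psi>0[of z2] False by simp
    next
      case z2C: True
      show ?thesis
      proof (cases "\<forall>v\<in>C. z1 v = c v")
        case False
        then show ?thesis using G p1 \<phi>0[of z1] by simp
      next
        case True
        have "\<psi> m1 = \<psi> z2"
          by (rule \<psi>loc) (use True z2C CT in \<open>auto simp: m1_def\<close>)
        then show ?thesis using G p1 m2C z2C unfolding ind_def by simp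
      qed
    qed
  qed
  have "(\<Sum>z\<in>UNIV. \<phi> z) * (\<Sum>z\<in>UNIV. \<psi> z) = (\<Sum>z1\<in>UNIV. \<Sum>z2\<in>UNIV. \<phi> z1 * \<psi> z2)"
    by (simp add: sum_product)
  also have "\<dots> = (\<Sum>p\<in>UNIV \<times> UNIV. \<phi> (fst p) * \<psi> (snd p))"
    by (simp add: sum.cartesian_product split_beta)
  also have "\<dots> = (\<Sum>p\<in>UNIV \<times> UNIV. G (sw p))"
    using pt by (intro sum.cong refl) (metis prod.collapse)
  also have "\<dots> = (\<Sum>p\<in>UNIV \<times> UNIV. G p)"
    by (rule sum.reindex_bij_witness[where i = sw and j = sw]) (auto simp: sw_sw)
  also have "\<dots> = (\<Sum>m1\<in>UNIV. \<Sum>m2\<in>UNIV. \<phi> m1 * \<psi> m1 * ind m2)"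
    unfolding G_def by (simp add: sum.cartesian_product split_beta)
  also have "\<dots> = (\<Sum>m2\<in>UNIV. ind m2) * (\<Sum>m1\<in>UNIV. \<phi> m1 * \<psi> m1)"
    by (simp add: sum_distrib_left sum_distrib_right mult.commute)
  finally show ?thesis unfolding ind_def .
qed

lemma sum_filter_univ:
  fixes f :: "'b::finite \<Rightarrow> real"
  shows "sum f {z. P z} = (\<Sum>z\<in>UNIV. if P z then f z else 0)"
  by (simp add: sum.If_cases)

lemma prod_loc:
  fixes K :: "'v::finite \<Rightarrow> 'a::finite \<Rightarrow> ('v \<Rightarrow> 'a) \<Rightarrow> real"
  assumes Kloc: "\<forall>v a z z'. (\<forall>w\<in>parents E v. z w = z' w) \<longrightarrow> K v a z = K v a z'"
    and S: "\<forall>v\<in>S. insert v (parents E v) \<subseteq> U" and zz: "\<forall>v\<in>U. z v = z' v"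
  shows "(\<Prod>v\<in>S. K v (z v) z) = (\<Prod>v\<in>S. K v (z' v) z')"
proof (intro prod.cong refl)
  fix v assume v: "v \<in> S"
  then have "\<forall>w\<in>parents E v. z w = z' w" "z v = z' v" using S zz by auto
  then show "K v (z v) z = K v (z' v) z'"
    using spec[OF spec[OF spec[OF spec[OF Kloc, of v], of "z' v"], of z], of z'] by simp
qed

lemma component_main:
  fixes K :: "'v::finite \<Rightarrow> 'a::finite \<Rightarrow> ('v \<Rightarrow> 'a) \<Rightarrow> real" and c :: "'v \<Rightarrow> 'a"
  assumes ac: "acyclic E"
    and Knn: "\<forall>v a z. K v a z \<ge> 0"
    and Ksum: "\<forall>v z. (\<Sum>a\<in>UNIV. K v a z) = 1"
    and Kloc: "\<forall>v a z z'. (\<forall>w\<in>parents E v. z w = z' w) \<longrightarrow> K v a z = K v a z'"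
    and ds: "d_separated E X Y C"
    and XC: "X \<notin> C" and YC: "Y \<notin> C"
  shows "\<exists>f g. (\<forall>x. f x \<ge> 0) \<and> (\<forall>y. g y \<ge> 0) \<and>
    (\<forall>x y. (\<Sum>z\<in>{z. z X = x \<and> z Y = y \<and> (\<forall>v\<in>C. z v = c v)}. \<Prod>v\<in>UNIV. K v (z v) z) = f x * g y)"
proof -
  define R where "R = Rset E C X"
  define A where "A = Aset E C X Y"
  define T where "T = - (R \<union> C)"
  define A1 where "A1 = {v\<in>A. insert v (parents E v) \<inter> R \<noteq> {}}"
  define A2 where "A2 = A - A1"
  define I1 :: "'a \<Rightarrow> ('v \<Rightarrow> 'a) \<Rightarrow> real" where
    "I1 x z = (if z X = x \<and> (\<forall>v\<in>C. z v = c v) then 1 else 0)" for x z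
  define I2 :: "'a \<Rightarrow> ('v \<Rightarrow> 'a) \<Rightarrow> real" where
    "I2 y z = (if z Y = y \<and> (\<forall>v\<in>C. z v = c v) then 1 else 0)" for y z
  define \<phi> where "\<phi> x z = I1 x z * (\<Prod>v\<in>A1. K v (z v) z)" for x z
  define \<psi> where "\<psi> y z = I2 y z * (\<Prod>v\<in>A2. K v (z v) z)" for y z
  define n :: real where "n = real (card (UNIV :: 'a set))"
  define N :: real where "N = (\<Sum>z\<in>UNIV. if \<forall>v\<in>C. z v = c v then 1 else 0)"
  define \<kappa> where "\<kappa> = (1 / n) ^ card (- A) / N"
  have nY: "\<not> (\<exists>p. active E C p \<and> hd p = X \<and> last p = Y)" using noY[OF ac ds] .
  have XR: "X \<in> R" unfolding R_def using X_in_R[OF XC] .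
  have YR: "Y \<notin> R" unfolding R_def using Y_notin_R[OF ac ds] .
  have RC: "R \<inter> C = {}" unfolding R_def Rset_def by auto
  have XA: "X \<in> A" and YA: "Y \<in> A" unfolding A_def Aset_def by auto
  have CA: "C \<subseteq> A" unfolding A_def Aset_def anc_def by auto
  have famA: "\<forall>v\<in>A. insert v (parents E v) \<subseteq> A"
    unfolding A_def by (auto intro: Aset_parent)
  have famA1: "\<forall>v\<in>A1. insert v (parents E v) \<subseteq> R \<union> C"
  proof
    fix v assume v: "v \<in> A1"
    then obtain u where u: "u \<in> insert v (parents E v)" "u \<in> R" unfolding A1_def by blast
    have vA: "v \<in> Aset E C X Y" using v unfolding A1_def A_def by auto
    have uC: "u \<notin> C" using u RC by auto
    show "insert v (parents E v) \<subseteq> R \<union> C"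
    proof
      fix w assume w: "w \<in> insert v (parents E v)"
      show "w \<in> R \<union> C"
      proof (cases "w \<in> C")
        case False
        then have "w \<in> Rset E C X" using closure[OF ac nY vA u(1) w uC False] u(2) unfolding R_def by blast
        then show ?thesis unfolding R_def by blast
      qed simp
    qed
  qed
  have famA2: "\<forall>v\<in>A2. insert v (parents E v) \<subseteq> T \<union> C"
    unfolding A2_def A1_def T_def by blast
  have Qsplit: "(\<Prod>v\<in>UNIV. K v (z v) z) = (\<Prod>v\<in>A1. K v (z v) z) * (\<Prod>v\<in>A2. K v (z v) z) * (\<Prod>v\<in>- A. K v (z v) z)" for z
  proof -
    have "(\<Prod>v\<in>UNIV. K v (z v) z) = (\<Prod>v\<in>UNIV - A. K v (z v) z) * (\<Prod>v\<in>A. K v (z v) z)"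
      by (rule prod.subset_diff) auto
    moreover have "(\<Prod>v\<in>A. K v (z v) z) = (\<Prod>v\<in>A - A1. K v (z v) z) * (\<Prod>v\<in>A1. K v (z v) z)"
      by (rule prod.subset_diff) (auto simp: A1_def)
    ultimately show ?thesis unfolding A2_def by (simp add: Compl_eq_Diff_UNIV mult_ac)
  qed
  have ev: "(if z X = x \<and> z Y = y \<and> (\<forall>v\<in>C. z v = c v) then q else 0) = I1 x z * I2 y z * q" for x y z and q :: real
    unfolding I1_def I2_def by auto
  have Hloc: "\<forall>z z'. (\<forall>v. v \<notin> - A \<longrightarrow> z v = z' v) \<longrightarrow>
      I1 x z * I2 y z * ((\<Prod>v\<in>A1. K v (z v) z) * (\<Prod>v\<in>A2. K v (z v) z)) =
      I1 x z' * I2 y z' * ((\<Prod>v\<in>A1. K v (z' v) z') * (\<Prod>v\<in>A2. K v (z' v) z'))" for x y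
  proof (intro allI impI)
    fix z z' :: "'v \<Rightarrow> 'a"
    assume "\<forall>v. v \<notin> - A \<longrightarrow> z v = z' v"
    then have zz: "\<forall>v\<in>A. z v = z' v" by auto
    have zzC: "\<forall>v\<in>C. z v = z' v" using zz CA by blast
    have zC: "(\<forall>v\<in>C. z v = c v) \<longleftrightarrow> (\<forall>v\<in>C. z' v = c v)" using zzC by metis
    have "I1 x z = I1 x z'" "I2 y z = I2 y z'" unfolding I1_def I2_def using zz XA YA zC by auto
    moreover have "(\<Prod>v\<in>A1. K v (z v) z) = (\<Prod>v\<in>A1. K v (z' v) z')"
      by (rule prod_loc[OF Kloc _ zz]) (use famA in \<open>auto simp: A1_def\<close>)
    moreover have "(\<Prod>v\<in>A2. K v (z v) z) = (\<Prod>v\<in>A2. K v (z' v) z')"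
      by (rule prod_loc[OF Kloc _ zz]) (use famA in \<open>auto simp: A2_def\<close>)
    ultimately show "I1 x z * I2 y z * ((\<Prod>v\<in>A1. K v (z v) z) * (\<Prod>v\<in>A2. K v (z v) z)) =
      I1 x z' * I2 y z' * ((\<Prod>v\<in>A1. K v (z' v) z') * (\<Prod>v\<in>A2. K v (z' v) z'))" by simp
  qed
  have N0: "N > 0"
  proof -
    have "(if \<forall>v\<in>C. c v = c v then 1 else 0) \<le> N"
      unfolding N_def by (rule member_le_sum) auto
    moreover have "N \<ge> 0" unfolding N_def by (rule sum_nonneg) auto
    ultimately show ?thesis by simp
  qed
  have split: "(\<Sum>z\<in>UNIV. \<phi> x z) * (\<Sum>z\<in>UNIV. \<psi> y z) = N * (\<Sum>z\<in>UNIV. \<phi> x z * \<psi> y z)" for x y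
    unfolding N_def
  proof (rule prod_split_sum[where T = T])
    show "C \<inter> T = {}" unfolding T_def by auto
  next
    fix z z' :: "'v \<Rightarrow> 'a" assume zz0: "\<forall>v. v \<notin> T \<longrightarrow> z v = z' v"
    then have zz: "\<forall>v\<in>R \<union> C. z v = z' v" unfolding T_def by auto
    have "I1 x z = I1 x z'" unfolding I1_def using zz XR by auto
    moreover have "(\<Prod>v\<in>A1. K v (z v) z) = (\<Prod>v\<in>A1. K v (z' v) z')"
      by (rule prod_loc[OF Kloc famA1 zz])
    ultimately show "\<phi> x z = \<phi> x z'" unfolding \<phi>_def by simp
  next
    fix z z' :: "'v \<Rightarrow> 'a" assume zz0: "\<forall>v. v \<in> T \<or> v \<in> C \<longrightarrow> z v = z' v"
    then have zz: "\<forall>v\<in>T \<union> C. z v = z' v" by auto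
    have YT: "Y \<in> T" unfolding T_def using YR YC by auto
    have "I2 y z = I2 y z'" unfolding I2_def using zz YT by auto
    moreover have "(\<Prod>v\<in>A2. K v (z v) z) = (\<Prod>v\<in>A2. K v (z' v) z')"
      by (rule prod_loc[OF Kloc famA2 zz])
    ultimately show "\<psi> y z = \<psi> y z'" unfolding \<psi>_def by simp
  next
    fix z :: "'v \<Rightarrow> 'a" assume "\<not> (\<forall>v\<in>C. z v = c v)"
    then show "\<phi> x z = 0" "\<psi> y z = 0" unfolding \<phi>_def \<psi>_def I1_def I2_def by auto
  qed
  have main: "(\<Sum>z\<in>{z. z X = x \<and> z Y = y \<and> (\<forall>v\<in>C. z v = c v)}. \<Prod>v\<in>UNIV. K v (z v) z)
      = (\<kappa> * (\<Sum>z\<in>UNIV. \<phi> x z)) * (\<Sum>z\<in>UNIV. \<psi> y z)" for x y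
  proof -
    have "(\<Sum>z\<in>{z. z X = x \<and> z Y = y \<and> (\<forall>v\<in>C. z v = c v)}. \<Prod>v\<in>UNIV. K v (z v) z)
        = (\<Sum>z\<in>UNIV. (I1 x z * I2 y z * ((\<Prod>v\<in>A1. K v (z v) z) * (\<Prod>v\<in>A2. K v (z v) z)))
              * (\<Prod>v\<in>- A. K v (z v) z))"
      unfolding sum_filter_univ ev Qsplit by (simp add: mult_ac)
    also have "\<dots> = (1 / n) ^ card (- A) *
        (\<Sum>z\<in>UNIV. I1 x z * I2 y z * ((\<Prod>v\<in>A1. K v (z v) z) * (\<Prod>v\<in>A2. K v (z v) z)))"
      unfolding n_def by (rule sumout[OF ac Ksum Kloc Hloc])
    also have "(\<Sum>z\<in>UNIV. I1 x z * I2 y z * ((\<Prod>v\<in>A1. K v (z v) z) * (\<Prod>v\<in>A2. K v (z v) z)))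
        = (\<Sum>z\<in>UNIV. \<phi> x z * \<psi> y z)"
      unfolding \<phi>_def \<psi>_def by (simp add: mult_ac)
    also have "\<dots> = (\<Sum>z\<in>UNIV. \<phi> x z) * (\<Sum>z\<in>UNIV. \<psi> y z) / N"
      using split[of x y] N0 by (simp add: field_simps)
    finally show ?thesis unfolding \<kappa>_def by simp
  qed
  have \<phi>nn: "\<phi> x z \<ge> 0" for x z
    unfolding \<phi>_def I1_def using Knn by (auto intro!: prod_nonneg)
  have \<psi>nn: "\<psi> y z \<ge> 0" for y z
    unfolding \<psi>_def I2_def using Knn by (auto intro!: prod_nonneg)
  have \<kappa>nn: "\<kappa> \<ge> 0" unfolding \<kappa>_def n_def using N0 by simp
  show ?thesis
    apply (rule exI[of _ "\<lambda>x. \<kappa> * (\<Sum>z\<in>UNIV. \<phi> x z)"])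
    apply (rule exI[of _ "\<lambda>y. (\<Sum>z\<in>UNIV. \<psi> y z)"])
    using main \<phi>nn \<psi>nn \<kappa>nn by (auto intro!: sum_nonneg mult_nonneg_nonneg)
qed

lemma component:
  fixes K :: "'v::finite \<Rightarrow> 'a::finite \<Rightarrow> ('v \<Rightarrow> 'a) \<Rightarrow> real" and c :: "'v \<Rightarrow> 'a"
  assumes ac: "acyclic E"
    and Knn: "\<forall>v a z. K v a z \<ge> 0"
    and Ksum: "\<forall>v z. (\<Sum>a\<in>UNIV. K v a z) = 1"
    and Kloc: "\<forall>v a z z'. (\<forall>w\<in>parents E v. z w = z' w) \<longrightarrow> K v a z = K v a z'"
    and ds: "d_separated E X Y C"
  shows "\<exists>f g. (\<forall>x. f x \<ge> 0) \<and> (\<forall>y. g y \<ge> 0) \<and>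
    (\<forall>x y. (\<Sum>z\<in>{z. z X = x \<and> z Y = y \<and> (\<forall>v\<in>C. z v = c v)}. \<Prod>v\<in>UNIV. K v (z v) z) = f x * g y)"
proof -
  have Qnn: "(\<Prod>v\<in>UNIV. K v (z v) z) \<ge> 0" for z using Knn by (auto intro!: prod_nonneg)
  show ?thesis
  proof (cases "X \<in> C")
    case XC: True
    define g where "g y = (\<Sum>z\<in>{z. z X = c X \<and> z Y = y \<and> (\<forall>v\<in>C. z v = c v)}. \<Prod>v\<in>UNIV. K v (z v) z)" for y
    have "(\<Sum>z\<in>{z. z X = x \<and> z Y = y \<and> (\<forall>v\<in>C. z v = c v)}. \<Prod>v\<in>UNIV. K v (z v) z)
        = (if x = c X then 1 else 0) * g y" for x y
    proof (cases "x = c X")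
      case True then show ?thesis unfolding g_def by simp
    next
      case False
      have e: "{z. z X = x \<and> z Y = y \<and> (\<forall>v\<in>C. z v = c v)} = {}" using XC False by auto
      show ?thesis using False unfolding e by simp
    qed
    moreover have "g y \<ge> 0" for y unfolding g_def using Qnn by (auto intro!: sum_nonneg)
    ultimately show ?thesis
      by (intro exI[of _ "\<lambda>x. if x = c X then 1 else 0"] exI[of _ g]) auto
  next
    case XC: False
    show ?thesis
    proof (cases "Y \<in> C")
      case YC: True
      define f where "f x = (\<Sum>z\<in>{z. z X = x \<and> z Y = c Y \<and> (\<forall>v\<in>C. z v = c v)}. \<Prod>v\<in>UNIV. K v (z v) z)" for x
      have "(\<Sum>z\<in>{z. z X = x \<and> z Y = y \<and> (\<forall>v\<in>C. z v = c v)}. \<Prod>v\<in>UNIV. K v (z v) z)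
          = f x * (if y = c Y then 1 else 0)" for x y
      proof (cases "y = c Y")
        case True then show ?thesis unfolding f_def by simp
      next
        case False
        have e: "{z. z X = x \<and> z Y = y \<and> (\<forall>v\<in>C. z v = c v)} = {}" using YC False by auto
        show ?thesis using False unfolding e by simp
      qed
      moreover have "f x \<ge> 0" for x unfolding f_def using Qnn by (auto intro!: sum_nonneg)
      ultimately show ?thesis
        by (intro exI[of _ f] exI[of _ "\<lambda>y. if y = c Y then 1 else 0"]) auto
    next
      case YC: False
      show ?thesis using component_main[OF ac Knn Ksum Kloc ds XC YC] .
    qed
  qed
qed

theorem lemma1:
  fixes E :: "('v::finite \<times> 'v) set"
    and P :: "('v \<Rightarrow> 'a::finite) \<Rightarrow> real"
    and k :: nat and X Y :: 'v and C :: "'v set"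
  assumes "is_dag E"
    and "mixture_markovian E k P"
    and "d_separated E X Y C"
  shows "\<forall>c :: 'v \<Rightarrow> 'a. nonneg_rank (prob_matrix P X Y C c) \<le> k"
proof
  fix c :: "'v \<Rightarrow> 'a"
  have ac: "acyclic E" using assms(1) unfolding is_dag_def .
  obtain w :: "nat \<Rightarrow> real" and Q :: "nat \<Rightarrow> ('v \<Rightarrow> 'a) \<Rightarrow> real" where
    w: "\<forall>u<k. w u \<ge> 0" and Qm: "\<forall>u<k. is_distribution (Q u) \<and> markovian E (Q u)"
    and Pw: "\<forall>x. P x = (\<Sum>u<k. w u * Q u x)"
    using assms(2) unfolding mixture_markovian_def by (elim exE conjE) blast
  define Good where "Good u f g \<longleftrightarrow> (\<forall>x. f x \<ge> 0) \<and> (\<forall>y. g y \<ge> 0) \<and> (\<forall>z. Q u z \<ge> 0) \<and>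
    (\<forall>x y. (\<Sum>z\<in>{z. z X = x \<and> z Y = y \<and> (\<forall>v\<in>C. z v = c v)}. Q u z) = f x * g y)"
    for u and f g :: "'a \<Rightarrow> real"
  have "\<forall>u<k. \<exists>f g. Good u f g"
  proof (intro allI impI)
    fix u assume u: "u < k"
    then have "markovian E (Q u)" using Qm by blast
    then obtain K :: "'v \<Rightarrow> 'a \<Rightarrow> ('v \<Rightarrow> 'a) \<Rightarrow> real" where
      Knn: "\<forall>v a z. K v a z \<ge> 0" and Ksum: "\<forall>v z. (\<Sum>a\<in>UNIV. K v a z) = 1"
      and Kloc: "\<forall>v a z z'. (\<forall>w\<in>parents E v. z w = z' w) \<longrightarrow> K v a z = K v a z'"
      and QK: "\<forall>x. Q u x = (\<Prod>v\<in>UNIV. K v (x v) x)"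
      unfolding markovian_def by (elim exE conjE) blast
    obtain f g where fg: "\<forall>x. f x \<ge> 0" "\<forall>y. g y \<ge> 0"
      "\<forall>x y. (\<Sum>z\<in>{z. z X = x \<and> z Y = y \<and> (\<forall>v\<in>C. z v = c v)}. \<Prod>v\<in>UNIV. K v (z v) z) = f x * g y"
      using component[OF ac Knn Ksum Kloc assms(3), of c] by (elim exE conjE) blast
    have "\<forall>z. Q u z \<ge> 0" using QK Knn by (auto intro!: prod_nonneg)
    moreover have "\<forall>x y. (\<Sum>z\<in>{z. z X = x \<and> z Y = y \<and> (\<forall>v\<in>C. z v = c v)}. Q u z) = f x * g y"
      using fg(3) QK by simp
    ultimately have "Good u f g" unfolding Good_def using fg(1,2) by blast
    then show "\<exists>f g. Good u f g" by blast
  qed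
  then obtain F G where FG0: "\<forall>u<k. Good u (F u) (G u)" by metis
  then have FG: "\<forall>u<k. (\<forall>x. F u x \<ge> 0) \<and> (\<forall>y. G u y \<ge> 0) \<and> (\<forall>z. Q u z \<ge> 0) \<and>
    (\<forall>x y. (\<Sum>z\<in>{z. z X = x \<and> z Y = y \<and> (\<forall>v\<in>C. z v = c v)}. Q u z) = F u x * G u y)"
    unfolding Good_def by blast
  define Pc where "Pc = prob_event P (\<lambda>z. \<forall>v\<in>C. z v = c v)"
  have Pnn: "P z \<ge> 0" for z
    unfolding Pw[rule_format] using w FG by (auto intro!: sum_nonneg mult_nonneg_nonneg)
  have Pc: "Pc \<ge> 0" unfolding Pc_def prob_event_def using Pnn by (auto intro!: sum_nonneg)
  define Am where "Am x i = (if i < k then w i * F i x / Pc else 0)" for x i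
  define Bm where "Bm i y = (if i < k then G i y else 0)" for i y
  have ev: "prob_event P (\<lambda>z. z X = x \<and> z Y = y \<and> (\<forall>v\<in>C. z v = c v)) = (\<Sum>u<k. w u * (F u x * G u y))" for x y
  proof -
    have "prob_event P (\<lambda>z. z X = x \<and> z Y = y \<and> (\<forall>v\<in>C. z v = c v))
        = (\<Sum>z\<in>{z. z X = x \<and> z Y = y \<and> (\<forall>v\<in>C. z v = c v)}. \<Sum>u<k. w u * Q u z)"
      unfolding prob_event_def using Pw by simp
    also have "\<dots> = (\<Sum>u<k. w u * (\<Sum>z\<in>{z. z X = x \<and> z Y = y \<and> (\<forall>v\<in>C. z v = c v)}. Q u z))"
      by (simp add: sum.swap[of _ "{..<k}"] sum_distrib_left)
    also have "\<dots> = (\<Sum>u<k. w u * (F u x * G u y))"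
      using FG by (intro sum.cong refl) simp
    finally show ?thesis .
  qed
  have M: "prob_matrix P X Y C c x y = (\<Sum>i<k. Am x i * Bm i y)" for x y
    unfolding prob_matrix_def ev Pc_def[symmetric] Am_def Bm_def
    by (simp add: sum_divide_distrib mult_ac)
  have "\<exists>(A :: 'a \<Rightarrow> nat \<Rightarrow> real) (B :: nat \<Rightarrow> 'a \<Rightarrow> real).
      (\<forall>x i. A x i \<ge> 0) \<and> (\<forall>i y. B i y \<ge> 0) \<and>
      (\<forall>x y. prob_matrix P X Y C c x y = (\<Sum>i<k. A x i * B i y))"
  proof (intro exI conjI allI)
    show "0 \<le> Am x i" for x i unfolding Am_def using w FG Pc by (auto intro!: divide_nonneg_nonneg mult_nonneg_nonneg)
    show "0 \<le> Bm i y" for i y unfolding Bm_def using FG by auto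
    show "prob_matrix P X Y C c x y = (\<Sum>i<k. Am x i * Bm i y)" for x y by (rule M)
  qed
  then show "nonneg_rank (prob_matrix P X Y C c) \<le> k"
    unfolding nonneg_rank_def by (rule Least_le)
qed

end
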